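(* Let $n\ge2$, let $c=(c_{i,j})$ be an $n\times(n+1)$ matrix with entries in $\{0,1\}$, $\sigma_1,\ldots,\sigma_n>0$, $\gamma_1,\ldots,\gamma_{n+1}>0$. Let $\mathbf{X}=(X_1,\ldots,X_n)'$ have decumulative distribution function \[ \mathbf{P}[X_1>x_1,\ldots,X_n>x_n]=\prod_{j=1}^{n+1}\left(1+\sum_{i=1}^n\frac{c_{i,j}}{\sigma_i}x_i\right)^{-\gamma_j},\quad (x_1,\ldots,x_n)'\in(0,\infty)^n. \] Let $1\le k\ne l\le n$ with $\gamma^\ast_{c,k}=\sum_jc_{k,j}\gamma_j>2$ and $\gamma^\ast_{c,l}=\sum_jc_{l,j}\gamma_j>2$. Then the Pearson correlation satisfies $\mathbf{Corr}[X_k,X_l]\in[0,1/2)$. *)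

theory Defs
  imports "HOL-Probability.Probability"
begin

definition covariance :: "'a measure \<Rightarrow> ('a \<Rightarrow> real) \<Rightarrow> ('a \<Rightarrow> real) \<Rightarrow> real" where
  "covariance M X Y =
     (LINT \<omega>|M. (X \<omega> - (LINT \<eta>|M. X \<eta>)) * (Y \<omega> - (LINT \<eta>|M. Y \<eta>)))"

definition pearson_corr :: "'a measure \<Rightarrow> ('a \<Rightarrow> real) \<Rightarrow> ('a \<Rightarrow> real) \<Rightarrow> real" where
  "pearson_corr M X Y = covariance M X Y / sqrt (covariance M X X * covariance M Y Y)"

end

theory Submission
  imports Defs
begin

lemma lim_powr_shift:
  assumes "e < 0"
  shows "((\<lambda>t::real. (c + t) powr e) \<longlongrightarrow> 0) at_top"
  by (rule tendsto_neg_powr[OF assms filterlim_tendsto_add_at_top[OF tendsto_const filterlim_ident]])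

lemma nn_int_powr:
  fixes \<alpha> c a :: real
  assumes "\<alpha> > 1" "c + a > 0"
  shows "(\<integral>\<^sup>+t. ennreal ((c+t) powr (-\<alpha>)) * indicator {a..} t \<partial>lborel) = ennreal ((c+a) powr (1-\<alpha>) / (\<alpha>-1))"
proof -
  have "(\<integral>\<^sup>+t. ennreal ((c+t) powr (-\<alpha>)) * indicator {a..} t \<partial>lborel) = 0 - (- ((c+a) powr (1-\<alpha>) / (\<alpha>-1)))"
  proof (rule nn_integral_FTC_atLeast)
    show "(\<lambda>t. (c+t) powr (-\<alpha>)) \<in> borel_measurable borel" by measurable
    fix x assume x: "a \<le> x"
    then have pos: "c + x > 0" using assms by linarith
    show "0 \<le> (c+x) powr (-\<alpha>)" by simp
    have "DERIV (\<lambda>t. (c+t) powr (1-\<alpha>)) x :> (1-\<alpha>) * (c+x) powr ((1-\<alpha>) - of_nat 1) * 1"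
      by (rule DERIV_fun_powr) (auto intro!: derivative_eq_intros simp: pos)
    then have "DERIV (\<lambda>t. - ((c+t) powr (1-\<alpha>) / (\<alpha>-1))) x :> - (((1-\<alpha>) * (c+x) powr ((1-\<alpha>) - of_nat 1) * 1) / (\<alpha>-1))"
      by (intro DERIV_minus DERIV_cdivide)
    moreover have "- (((1-\<alpha>) * (c+x) powr ((1-\<alpha>) - of_nat 1) * 1) / (\<alpha>-1)) = (c+x) powr (-\<alpha>)"
    proof -
      have e1: "(1-\<alpha>) - of_nat 1 = -\<alpha>" by simp
      have "\<alpha> - 1 \<noteq> 0" using assms by simp
      then show ?thesis unfolding e1 by (simp add: field_simps)
    qed
    ultimately show "DERIV (\<lambda>t. - ((c+t) powr (1-\<alpha>) / (\<alpha>-1))) x :> (c+x) powr (-\<alpha>)"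
      by simp
  next
    have "((\<lambda>t. (c+t) powr (1-\<alpha>)) \<longlongrightarrow> 0) at_top" using assms by (intro lim_powr_shift) simp
    then have "((\<lambda>t. - ((c+t) powr (1-\<alpha>) / (\<alpha>-1))) \<longlongrightarrow> - (0 / (\<alpha>-1))) at_top"
      by (intro tendsto_minus tendsto_divide tendsto_const) (use assms in auto)
    then show "((\<lambda>t. - ((c+t) powr (1-\<alpha>) / (\<alpha>-1))) \<longlongrightarrow> 0) at_top" by simp
  qed
  then show ?thesis by simp
qed


lemma nn_int_spowr:
  fixes \<alpha> :: real
  assumes "\<alpha> > 2"
  shows "(\<integral>\<^sup>+s. ennreal (s * (1+s) powr (-\<alpha>)) * indicator {0..} s \<partial>lborel) = ennreal (1/((\<alpha>-1)*(\<alpha>-2)))"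
proof -
  define F where "F s = (1+s) powr (2-\<alpha>) / (2-\<alpha>) - (1+s) powr (1-\<alpha>) / (1-\<alpha>)" for s :: real
  have "(\<integral>\<^sup>+s. ennreal (s * (1+s) powr (-\<alpha>)) * indicator {0..} s \<partial>lborel) = 0 - F 0"
  proof (rule nn_integral_FTC_atLeast)
    show "(\<lambda>s. s * (1+s) powr (-\<alpha>)) \<in> borel_measurable borel" by measurable
    fix x :: real assume x: "0 \<le> x"
    then have pos: "1 + x > 0" by linarith
    show "0 \<le> x * (1+x) powr (-\<alpha>)" using x by simp
    have d1: "DERIV (\<lambda>t. (1+t) powr (2-\<alpha>)) x :> (2-\<alpha>) * (1+x) powr ((2-\<alpha>) - of_nat 1) * 1"
      by (rule DERIV_fun_powr) (auto intro!: derivative_eq_intros simp: pos)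
    have d2: "DERIV (\<lambda>t. (1+t) powr (1-\<alpha>)) x :> (1-\<alpha>) * (1+x) powr ((1-\<alpha>) - of_nat 1) * 1"
      by (rule DERIV_fun_powr) (auto intro!: derivative_eq_intros simp: pos)
    have "DERIV F x :> ((2-\<alpha>) * (1+x) powr ((2-\<alpha>) - of_nat 1) * 1) / (2-\<alpha>) - ((1-\<alpha>) * (1+x) powr ((1-\<alpha>) - of_nat 1) * 1) / (1-\<alpha>)"
      unfolding F_def by (intro DERIV_diff DERIV_cdivide d1 d2)
    moreover have "((2-\<alpha>) * (1+x) powr ((2-\<alpha>) - of_nat 1) * 1) / (2-\<alpha>) - ((1-\<alpha>) * (1+x) powr ((1-\<alpha>) - of_nat 1) * 1) / (1-\<alpha>) = x * (1+x) powr (-\<alpha>)"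
    proof -
      have e1: "(2-\<alpha>) - of_nat 1 = 1 + (-\<alpha>)" "(1-\<alpha>) - of_nat 1 = -\<alpha>" by simp_all
      have ne: "2 - \<alpha> \<noteq> 0" "1 - \<alpha> \<noteq> 0" using assms by simp_all
      have "((2-\<alpha>) * (1+x) powr ((2-\<alpha>) - of_nat 1) * 1) / (2-\<alpha>) - ((1-\<alpha>) * (1+x) powr ((1-\<alpha>) - of_nat 1) * 1) / (1-\<alpha>)
         = (1+x) powr (1 + -\<alpha>) - (1+x) powr (-\<alpha>)"
        using ne unfolding e1 by simp
      also have "\<dots> = x * (1+x) powr (-\<alpha>)"
      proof -
        have "(1+x) powr (1 + -\<alpha>) = (1+x) powr 1 * (1+x) powr (-\<alpha>)" by (rule powr_add)
        also have "\<dots> = (1+x) * (1+x) powr (-\<alpha>)" using pos by simp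
        finally show ?thesis by (simp add: algebra_simps)
      qed
      finally show ?thesis .
    qed
    ultimately show "DERIV F x :> x * (1+x) powr (-\<alpha>)" by simp
  next
    have "((\<lambda>t. (1+t) powr (2-\<alpha>)) \<longlongrightarrow> 0) at_top" using assms by (intro lim_powr_shift) simp
    moreover have "((\<lambda>t. (1+t) powr (1-\<alpha>)) \<longlongrightarrow> 0) at_top" using assms by (intro lim_powr_shift) simp
    ultimately have "(F \<longlongrightarrow> 0 / (2-\<alpha>) - 0 / (1-\<alpha>)) at_top"
      unfolding F_def by (intro tendsto_diff tendsto_divide tendsto_const) (use assms in auto)
    then show "(F \<longlongrightarrow> 0) at_top" by simp
  qed
  also have "0 - F 0 = 1/((\<alpha>-1)*(\<alpha>-2))"
  proof -
    have "2 - \<alpha> \<noteq> 0" "1 - \<alpha> \<noteq> 0" using assms by simp_all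
    then show ?thesis unfolding F_def by (simp add: field_simps)
  qed
  finally show ?thesis .
qed

lemma nn_int_max:
  fixes \<alpha> s :: real
  assumes "\<alpha> > 1" "s \<ge> 0"
  shows "(\<integral>\<^sup>+t. ennreal ((1 + max s t) powr (-\<alpha>)) * indicator {0..} t \<partial>lborel)
    = ennreal (s * (1+s) powr (-\<alpha>)) + ennreal ((1+s) powr (1-\<alpha>) / (\<alpha>-1))"
proof -
  have "(\<integral>\<^sup>+t. ennreal ((1 + max s t) powr (-\<alpha>)) * indicator {0..} t \<partial>lborel)
     = (\<integral>\<^sup>+t. ennreal ((1+s) powr (-\<alpha>)) * indicator {0..<s} t + ennreal ((1+t) powr (-\<alpha>)) * indicator {s..} t \<partial>lborel)"
    using assms by (intro nn_integral_cong) (auto simp: indicator_def max_def)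
  also have "\<dots> = (\<integral>\<^sup>+t. ennreal ((1+s) powr (-\<alpha>)) * indicator {0..<s} t \<partial>lborel) + (\<integral>\<^sup>+t. ennreal ((1+t) powr (-\<alpha>)) * indicator {s..} t \<partial>lborel)"
    by (rule nn_integral_add) auto
  also have "(\<integral>\<^sup>+t. ennreal ((1+s) powr (-\<alpha>)) * indicator {0..<s} t \<partial>lborel) = ennreal ((1+s) powr (-\<alpha>)) * ennreal s"
    using assms by (simp add: nn_integral_cmult)
  also have "\<dots> = ennreal (s * (1+s) powr (-\<alpha>))"
    using assms by (simp add: ennreal_mult' mult.commute)
  also have "(\<integral>\<^sup>+t. ennreal ((1+t) powr (-\<alpha>)) * indicator {s..} t \<partial>lborel) = ennreal ((1+s) powr (1-\<alpha>) / (\<alpha>-1))"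
    using assms by (intro nn_int_powr) auto
  finally show ?thesis .
qed

lemma nn_int_second:
  fixes \<alpha> :: real
  assumes "\<alpha> > 2"
  shows "(\<integral>\<^sup>+s. (ennreal (s * (1+s) powr (-\<alpha>)) + ennreal ((1+s) powr (1-\<alpha>) / (\<alpha>-1))) * indicator {0..} s \<partial>lborel)
    = ennreal (2/((\<alpha>-1)*(\<alpha>-2)))"
proof -
  have "(\<integral>\<^sup>+s. (ennreal (s * (1+s) powr (-\<alpha>)) + ennreal ((1+s) powr (1-\<alpha>) / (\<alpha>-1))) * indicator {0..} s \<partial>lborel)
    = (\<integral>\<^sup>+s. ennreal (s * (1+s) powr (-\<alpha>)) * indicator {0..} s + ennreal (1/(\<alpha>-1)) * (ennreal ((1+s) powr (-(\<alpha>-1))) * indicator {0..} s) \<partial>lborel)"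
  proof (intro nn_integral_cong)
    fix s :: real
    have "ennreal ((1+s) powr (1-\<alpha>) / (\<alpha>-1)) = ennreal (1/(\<alpha>-1)) * ennreal ((1+s) powr (-(\<alpha>-1)))"
      using assms by (subst ennreal_mult'[symmetric]) (auto simp: divide_simps)
    then show "(ennreal (s * (1+s) powr (-\<alpha>)) + ennreal ((1+s) powr (1-\<alpha>) / (\<alpha>-1))) * indicator {0..} s
       = ennreal (s * (1+s) powr (-\<alpha>)) * indicator {0..} s + ennreal (1/(\<alpha>-1)) * (ennreal ((1+s) powr (-(\<alpha>-1))) * indicator {0..} s)"
      by (simp add: distrib_right mult.assoc)
  qed
  also have "\<dots> = (\<integral>\<^sup>+s. ennreal (s * (1+s) powr (-\<alpha>)) * indicator {0..} s \<partial>lborel) + ennreal (1/(\<alpha>-1)) * (\<integral>\<^sup>+s. ennreal ((1+s) powr (-(\<alpha>-1))) * indicator {0..} s \<partial>lborel)"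
    by (subst nn_integral_add) (auto simp: nn_integral_cmult)
  also have "\<dots> = ennreal (1/((\<alpha>-1)*(\<alpha>-2))) + ennreal (1/(\<alpha>-1)) * ennreal ((1+0) powr (1-(\<alpha>-1)) / ((\<alpha>-1)-1))"
    using assms by (subst nn_int_spowr, simp, subst nn_int_powr) auto
  also have "\<dots> = ennreal (2/((\<alpha>-1)*(\<alpha>-2)))"
  proof -
    have h: "0 < (\<alpha>-1)*(\<alpha>-2)" using assms by (intro mult_pos_pos) auto
    then have h': "\<alpha>*3 \<le> \<alpha>*\<alpha> + 2" by (simp add: algebra_simps)
    show ?thesis
      using assms h' by (subst ennreal_mult'[symmetric], simp, subst ennreal_plus[symmetric]) (auto simp: field_simps)
  qed
  finally show ?thesis .
qed

definition Fsurv :: "nat \<Rightarrow> (nat\<Rightarrow>nat\<Rightarrow>real) \<Rightarrow> (nat\<Rightarrow>real) \<Rightarrow> (nat\<Rightarrow>real) \<Rightarrow> (nat\<Rightarrow>real) \<Rightarrow> real" where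
  "Fsurv n c \<sigma> \<gamma> x = (\<Prod>j<n + 1. (1 + (\<Sum>i<n. c i j / \<sigma> i * x i)) powr (- \<gamma> j))"

lemma Fsurv_cont:
  assumes c: "\<And>i j. i < n \<Longrightarrow> j < n + 1 \<Longrightarrow> c i j \<in> {0, 1}"
    and s: "\<And>i. i < n \<Longrightarrow> \<sigma> i > 0"
    and x: "\<And>i. i < n \<Longrightarrow> x i \<ge> 0"
  shows "(\<lambda>m. Fsurv n c \<sigma> \<gamma> (\<lambda>i. x i + inverse (real (Suc m)))) \<longlonglongrightarrow> Fsurv n c \<sigma> \<gamma> x"
  unfolding Fsurv_def
proof (intro tendsto_prod tendsto_powr tendsto_const tendsto_add tendsto_sum tendsto_mult)
  show "(\<lambda>m. x i + inverse (real (Suc m))) \<longlonglongrightarrow> x i" for i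
    using tendsto_add[OF tendsto_const LIMSEQ_inverse_real_of_nat, of "x i"] by simp
  fix j assume j: "j \<in> {..<n+1}"
  have "0 \<le> (\<Sum>i<n. c i j / \<sigma> i * x i)"
    using c s x j by (intro sum_nonneg mult_nonneg_nonneg divide_nonneg_pos) force+
  then show "1 + (\<Sum>i<n. c i j / \<sigma> i * x i) \<noteq> 0" by linarith
qed

lemma surv_general:
  fixes n :: nat
  assumes M: "prob_space M" and Xm: "\<And>i. i < n \<Longrightarrow> X i \<in> borel_measurable M"
    and surv: "\<And>x. (\<forall>i<n. x i > 0) \<Longrightarrow> measure M {\<omega> \<in> space M. \<forall>i<n. X i \<omega> > x i} = F x"
    and cont: "(\<lambda>m. F (\<lambda>i. x i + inverse (real (Suc m)))) \<longlonglongrightarrow> F x"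
    and x: "\<And>i. i < n \<Longrightarrow> x i \<ge> 0"
  shows "measure M {\<omega> \<in> space M. \<forall>i<n. X i \<omega> > x i} = F x"
proof -
  interpret prob_space M by fact
  define A where "A m = {\<omega> \<in> space M. \<forall>i<n. X i \<omega> > x i + inverse (real (Suc m))}" for m
  have Am: "range A \<subseteq> sets M"
  proof safe
    fix m
    have "\<And>i. i \<in> {..<n} \<Longrightarrow> {\<omega> \<in> space M. X i \<omega> > x i + inverse (real (Suc m))} \<in> sets M"
      using Xm by measurable
    then have "{\<omega> \<in> space M. \<forall>i\<in>{..<n}. X i \<omega> > x i + inverse (real (Suc m))} \<in> sets M"
      by (intro sets.sets_Collect_finite_All) auto
    moreover have "A m = {\<omega> \<in> space M. \<forall>i\<in>{..<n}. X i \<omega> > x i + inverse (real (Suc m))}" unfolding A_def by blast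
    ultimately show "A m \<in> sets M" by simp
  qed
  have inc: "incseq A"
  proof (rule incseq_SucI)
    fix m
    have "inverse (real (Suc (Suc m))) \<le> inverse (real (Suc m))"
      by (rule le_imp_inverse_le) auto
    then show "A m \<subseteq> A (Suc m)" unfolding A_def using add_left_mono le_less_trans by blast
  qed
  have U: "(\<Union>m. A m) = {\<omega> \<in> space M. \<forall>i<n. X i \<omega> > x i}"
  proof safe
    fix \<omega> m i assume "\<omega> \<in> A m" "i < n"
    then have "X i \<omega> > x i + inverse (real (Suc m))" unfolding A_def by auto
    moreover have "inverse (real (Suc m)) > 0" by simp
    ultimately show "X i \<omega> > x i" by linarith
  next
    fix \<omega> m assume "\<omega> \<in> A m" then show "\<omega> \<in> space M" unfolding A_def by auto
  next
    fix \<omega> assume \<omega>: "\<omega> \<in> space M" "\<forall>i<n. X i \<omega> > x i"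
    have "\<forall>i\<in>{..<n}. eventually (\<lambda>m. inverse (real (Suc m)) < X i \<omega> - x i) sequentially"
    proof
      fix i assume "i \<in> {..<n}"
      then have "0 < X i \<omega> - x i" using \<omega> by auto
      then show "eventually (\<lambda>m. inverse (real (Suc m)) < X i \<omega> - x i) sequentially"
        by (rule order_tendstoD(2)[OF LIMSEQ_inverse_real_of_nat])
    qed
    then have "eventually (\<lambda>m. \<forall>i\<in>{..<n}. inverse (real (Suc m)) < X i \<omega> - x i) sequentially"
      by (rule eventually_ball_finite[rotated]) simp
    then obtain m where "\<forall>i\<in>{..<n}. inverse (real (Suc m)) < X i \<omega> - x i"
      by (auto simp: eventually_sequentially)
    then have "\<omega> \<in> A m" using \<omega> unfolding A_def by (auto simp: algebra_simps)
    then show "\<omega> \<in> (\<Union>m. A m)" by auto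
  qed
  have L1: "(\<lambda>m. measure M (A m)) \<longlonglongrightarrow> measure M {\<omega> \<in> space M. \<forall>i<n. X i \<omega> > x i}"
    using finite_Lim_measure_incseq[OF Am inc] unfolding U .
  have eq: "measure M (A m) = F (\<lambda>i. x i + inverse (real (Suc m)))" for m
  proof -
    have "\<forall>i<n. x i + inverse (real (Suc m)) > 0"
      using x by (simp add: add_nonneg_pos)
    then show ?thesis unfolding A_def by (rule surv)
  qed
  have L2: "(\<lambda>m. measure M (A m)) \<longlonglongrightarrow> F x"
    unfolding eq by (rule cont)
  show ?thesis by (rule LIMSEQ_unique[OF L1 L2])
qed

lemma biv:
  fixes M :: "'a measure" and n :: nat
    and c :: "nat \<Rightarrow> nat \<Rightarrow> real"
    and \<sigma> \<gamma> :: "nat \<Rightarrow> real"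
    and X :: "nat \<Rightarrow> 'a \<Rightarrow> real"
    and k l :: nat
  assumes M: "prob_space M"
    and c: "\<And>i j. i < n \<Longrightarrow> j < n + 1 \<Longrightarrow> c i j \<in> {0, 1}"
    and s: "\<And>i. i < n \<Longrightarrow> \<sigma> i > 0"
    and Xm: "\<And>i. i < n \<Longrightarrow> X i \<in> borel_measurable M"
    and surv: "\<And>x. (\<forall>i<n. x i > 0) \<Longrightarrow>
           measure M {\<omega> \<in> space M. \<forall>i<n. X i \<omega> > x i}
             = (\<Prod>j<n + 1. (1 + (\<Sum>i<n. c i j / \<sigma> i * x i)) powr (- \<gamma> j))"
    and kl: "k < n" "l < n" "k \<noteq> l"
    and uv: "u \<ge> 0" "v \<ge> 0"
  shows "measure M {\<omega> \<in> space M. X k \<omega> > u * \<sigma> k \<and> X l \<omega> > v * \<sigma> l}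
     = (\<Prod>j<n + 1. (1 + c k j * u + c l j * v) powr (- \<gamma> j))"
    and "AE \<omega> in M. \<forall>i<n. X i \<omega> > 0"
proof -
  interpret prob_space M by fact
  have gen: "measure M {\<omega> \<in> space M. \<forall>i<n. X i \<omega> > x i} = Fsurv n c \<sigma> \<gamma> x"
    if x: "\<And>i. i < n \<Longrightarrow> x i \<ge> 0" for x
    using M Xm
  proof (rule surv_general)
    show "\<And>x. \<forall>i<n. 0 < x i \<Longrightarrow> measure M {\<omega> \<in> space M. \<forall>i<n. x i < X i \<omega>} = Fsurv n c \<sigma> \<gamma> x"
      unfolding Fsurv_def by (rule surv)
    show "(\<lambda>m. Fsurv n c \<sigma> \<gamma> (\<lambda>i. x i + inverse (real (Suc m)))) \<longlonglongrightarrow> Fsurv n c \<sigma> \<gamma> x"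
      using c s x by (rule Fsurv_cont)
  qed (use x in auto)
  have ev: "{\<omega> \<in> space M. \<forall>i<n. X i \<omega> > x i} \<in> sets M" for x
  proof -
    have "\<And>i. i \<in> {..<n} \<Longrightarrow> {\<omega> \<in> space M. X i \<omega> > x i} \<in> sets M"
      using Xm by measurable
    then have "{\<omega> \<in> space M. \<forall>i\<in>{..<n}. X i \<omega> > x i} \<in> sets M"
      by (intro sets.sets_Collect_finite_All) auto
    moreover have "{\<omega> \<in> space M. \<forall>i<n. X i \<omega> > x i} = {\<omega> \<in> space M. \<forall>i\<in>{..<n}. X i \<omega> > x i}"
      by blast
    ultimately show ?thesis by simp
  qed
  have "measure M {\<omega> \<in> space M. \<forall>i<n. X i \<omega> > (\<lambda>_. 0) i} = Fsurv n c \<sigma> \<gamma> (\<lambda>_. 0)"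
    by (rule gen) simp
  then have "measure M {\<omega> \<in> space M. \<forall>i<n. X i \<omega> > 0} = 1"
    by (simp add: Fsurv_def)
  then show AE: "AE \<omega> in M. \<forall>i<n. X i \<omega> > 0"
    using prob_Collect_eq_1[OF ev[of "\<lambda>_. 0"]] by simp
  define x where "x = (\<lambda>i. (if i = k then u * \<sigma> k else 0) + (if i = l then v * \<sigma> l else 0))"
  have xnn: "\<And>i. i < n \<Longrightarrow> x i \<ge> 0"
  proof -
    have "0 \<le> u * \<sigma> k" "0 \<le> v * \<sigma> l" using uv s kl by (simp_all add: less_imp_le)
    then show "\<And>i. i < n \<Longrightarrow> x i \<ge> 0" unfolding x_def by simp
  qed
  have "measure M {\<omega> \<in> space M. X k \<omega> > u * \<sigma> k \<and> X l \<omega> > v * \<sigma> l} = measure M {\<omega> \<in> space M. \<forall>i<n. X i \<omega> > x i}"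
  proof (rule prob_eq_AE)
    show "AE \<omega> in M. (u * \<sigma> k < X k \<omega> \<and> v * \<sigma> l < X l \<omega>) = (\<forall>i<n. x i < X i \<omega>)"
      using AE
    proof eventually_elim
      case (elim \<omega>)
      show ?case
      proof
        assume a: "u * \<sigma> k < X k \<omega> \<and> v * \<sigma> l < X l \<omega>"
        show "\<forall>i<n. x i < X i \<omega>"
        proof safe
          fix i assume "i < n"
          then show "x i < X i \<omega>" using a elim kl unfolding x_def by auto
        qed
      next
        assume "\<forall>i<n. x i < X i \<omega>"
        then have "x k < X k \<omega>" "x l < X l \<omega>" using kl by auto
        then show "u * \<sigma> k < X k \<omega> \<and> v * \<sigma> l < X l \<omega>" using kl unfolding x_def by auto
      qed
    qed
    show "{\<omega> \<in> space M. u * \<sigma> k < X k \<omega> \<and> v * \<sigma> l < X l \<omega>} \<in> sets M"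
      using Xm kl by measurable
  qed (rule ev)
  also have "\<dots> = Fsurv n c \<sigma> \<gamma> x" by (rule gen[OF xnn])
  also have "\<dots> = (\<Prod>j<n + 1. (1 + c k j * u + c l j * v) powr (- \<gamma> j))"
    unfolding Fsurv_def
  proof (rule prod.cong[OF refl])
    fix j
    have "(\<Sum>i<n. c i j / \<sigma> i * x i) = (\<Sum>i<n. (if i = k then c k j * u else 0) + (if i = l then c l j * v else 0))"
    proof (rule sum.cong[OF refl])
      fix i assume "i \<in> {..<n}"
      then have "\<sigma> i \<noteq> 0" using s by (metis lessThan_iff less_irrefl)
      then show "c i j / \<sigma> i * x i = (if i = k then c k j * u else 0) + (if i = l then c l j * v else 0)"
        unfolding x_def using kl by (auto simp: field_simps)
    qed
    also have "\<dots> = c k j * u + c l j * v"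
      using kl by (simp add: sum.distrib)
    finally show "(1 + (\<Sum>i<n. c i j / \<sigma> i * x i)) powr - \<gamma> j = (1 + c k j * u + c l j * v) powr - \<gamma> j"
      by (simp add: add.assoc)
  qed
  finally show "measure M {\<omega> \<in> space M. X k \<omega> > u * \<sigma> k \<and> X l \<omega> > v * \<sigma> l}
     = (\<Prod>j<n + 1. (1 + c k j * u + c l j * v) powr (- \<gamma> j))" .
qed

lemma ennreal_layer: "ennreal (z::real) = (\<integral>\<^sup>+s. indicator {0..<z} s \<partial>lborel)"
proof (cases "z > 0")
  case True then show ?thesis by (simp add: emeasure_lborel_Ico)
next
  case False then show ?thesis by (simp add: ennreal_neg)
qed

lemma layer_cake_prod:
  assumes M: "prob_space M" and Z: "Z \<in> borel_measurable M" and W: "W \<in> borel_measurable M"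
  shows "(\<integral>\<^sup>+\<omega>. ennreal (Z \<omega>) * ennreal (W \<omega>) \<partial>M) =
    (\<integral>\<^sup>+s. \<integral>\<^sup>+t. emeasure M {\<omega>\<in>space M. 0\<le>s \<and> s<Z \<omega> \<and> 0\<le>t \<and> t<W \<omega>} \<partial>lborel \<partial>lborel)"
proof -
  interpret prob_space M by fact
  interpret P: pair_sigma_finite M lborel
    by (simp add: lborel.sigma_finite_measure_axioms pair_sigma_finite.intro sigma_finite_measure_axioms)
  define f where "f = (\<lambda>\<omega> s t. indicator {0..<Z \<omega>} s * indicator {0..<W \<omega>} t :: ennreal)"
  have fm: "(\<lambda>(\<omega>,t). f \<omega> s t) \<in> borel_measurable (M \<Otimes>\<^sub>M lborel)" for s
    unfolding f_def indicator_def atLeastLessThan_iff using Z W by measurable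
  have "(\<integral>\<^sup>+\<omega>. ennreal (Z \<omega>) * ennreal (W \<omega>) \<partial>M) = (\<integral>\<^sup>+\<omega>. \<integral>\<^sup>+s. \<integral>\<^sup>+t. f \<omega> s t \<partial>lborel \<partial>lborel \<partial>M)"
  proof (rule nn_integral_cong)
    fix \<omega>
    have "(\<integral>\<^sup>+s. \<integral>\<^sup>+t. f \<omega> s t \<partial>lborel \<partial>lborel) = (\<integral>\<^sup>+s. indicator {0..<Z \<omega>} s * (\<integral>\<^sup>+t. indicator {0..<W \<omega>} t \<partial>lborel) \<partial>lborel)"
      unfolding f_def by (subst nn_integral_cmult) auto
    also have "\<dots> = (\<integral>\<^sup>+s. indicator {0..<Z \<omega>} s \<partial>lborel) * (\<integral>\<^sup>+t. indicator {0..<W \<omega>} t \<partial>lborel)"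
      by (subst nn_integral_multc) auto
    finally show "ennreal (Z \<omega>) * ennreal (W \<omega>) = (\<integral>\<^sup>+s. \<integral>\<^sup>+t. f \<omega> s t \<partial>lborel \<partial>lborel)"
      by (simp only: ennreal_layer[symmetric])
  qed
  also have "\<dots> = (\<integral>\<^sup>+s. \<integral>\<^sup>+\<omega>. \<integral>\<^sup>+t. f \<omega> s t \<partial>lborel \<partial>M \<partial>lborel)"
    apply (rule P.Fubini'[symmetric])
    unfolding f_def indicator_def atLeastLessThan_iff using Z W by measurable
  also have "\<dots> = (\<integral>\<^sup>+s. \<integral>\<^sup>+t. \<integral>\<^sup>+\<omega>. f \<omega> s t \<partial>M \<partial>lborel \<partial>lborel)"
  proof (intro nn_integral_cong)
    fix s :: real
    show "(\<integral>\<^sup>+\<omega>. \<integral>\<^sup>+t. f \<omega> s t \<partial>lborel \<partial>M) = (\<integral>\<^sup>+t. \<integral>\<^sup>+\<omega>. f \<omega> s t \<partial>M \<partial>lborel)"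
      using P.Fubini'[OF fm[of s], symmetric] .
  qed
  also have "\<dots> = (\<integral>\<^sup>+s. \<integral>\<^sup>+t. emeasure M {\<omega>\<in>space M. 0\<le>s \<and> s<Z \<omega> \<and> 0\<le>t \<and> t<W \<omega>} \<partial>lborel \<partial>lborel)"
  proof (intro nn_integral_cong)
    fix s t :: real
    have meas: "{\<omega>\<in>space M. 0\<le>s \<and> s<Z \<omega> \<and> 0\<le>t \<and> t<W \<omega>} \<in> sets M"
      using Z W by measurable
    have "(\<integral>\<^sup>+\<omega>. f \<omega> s t \<partial>M) = (\<integral>\<^sup>+\<omega>. indicator {\<omega>\<in>space M. 0\<le>s \<and> s<Z \<omega> \<and> 0\<le>t \<and> t<W \<omega>} \<omega> \<partial>M)"
      by (rule nn_integral_cong) (auto simp: f_def split: split_indicator)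
    also have "\<dots> = emeasure M {\<omega>\<in>space M. 0\<le>s \<and> s<Z \<omega> \<and> 0\<le>t \<and> t<W \<omega>}"
      by (rule nn_integral_indicator[OF meas])
    finally show "(\<integral>\<^sup>+\<omega>. f \<omega> s t \<partial>M) = emeasure M {\<omega>\<in>space M. 0\<le>s \<and> s<Z \<omega> \<and> 0\<le>t \<and> t<W \<omega>}" .
  qed
  finally show ?thesis .
qed

lemma layer_cake_prod':
  assumes M: "prob_space M" and Z: "Z \<in> borel_measurable M" and W: "W \<in> borel_measurable M"
  shows "(\<integral>\<^sup>+\<omega>. ennreal (Z \<omega>) * ennreal (W \<omega>) \<partial>M) =
    (\<integral>\<^sup>+s. (\<integral>\<^sup>+t. ennreal (measure M {\<omega>\<in>space M. s<Z \<omega> \<and> t<W \<omega>}) * indicator {0..} t \<partial>lborel) * indicator {0..} s \<partial>lborel)"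
proof -
  interpret prob_space M by fact
  have m: "{\<omega>\<in>space M. s<Z \<omega> \<and> t<W \<omega>} \<in> sets M" for s t
    using Z W by measurable
  show ?thesis
    unfolding layer_cake_prod[OF M Z W]
  proof (intro nn_integral_cong)
    fix s :: real
    show "(\<integral>\<^sup>+t. emeasure M {\<omega>\<in>space M. 0\<le>s \<and> s<Z \<omega> \<and> 0\<le>t \<and> t<W \<omega>} \<partial>lborel) =
      (\<integral>\<^sup>+t. ennreal (measure M {\<omega>\<in>space M. s<Z \<omega> \<and> t<W \<omega>}) * indicator {0..} t \<partial>lborel) * indicator {0..} s"
    proof (cases "0 \<le> s")
      case True
      then show ?thesis
      proof (simp, intro nn_integral_cong)
        fix t :: real
        show "emeasure M {\<omega>\<in>space M. s<Z \<omega> \<and> 0\<le>t \<and> t<W \<omega>} = ennreal (measure M {\<omega>\<in>space M. s<Z \<omega> \<and> t<W \<omega>}) * indicator {0..} t"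
          by (cases "0 \<le> t") (simp_all add: emeasure_eq_measure m)
      qed
    qed simp
  qed
qed

lemma layer_cake_single:
  assumes M: "prob_space M" and Z: "Z \<in> borel_measurable M"
  shows "(\<integral>\<^sup>+\<omega>. ennreal (Z \<omega>) \<partial>M) =
    (\<integral>\<^sup>+s. ennreal (measure M {\<omega>\<in>space M. s<Z \<omega>}) * indicator {0..} s \<partial>lborel)"
proof -
  interpret prob_space M by fact
  have "(\<integral>\<^sup>+\<omega>. ennreal (Z \<omega>) \<partial>M) = (\<integral>\<^sup>+s. (\<integral>\<^sup>+t. ennreal (measure M {\<omega>\<in>space M. s<Z \<omega> \<and> (t::real)<1}) * indicator {0..} t \<partial>lborel) * indicator {0..} s \<partial>lborel)"
    by (subst layer_cake_prod'[OF M Z, of "\<lambda>_. 1", symmetric]) simp_all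
  also have "\<dots> = (\<integral>\<^sup>+s. ennreal (measure M {\<omega>\<in>space M. s<Z \<omega>}) * indicator {0..} s \<partial>lborel)"
  proof (intro nn_integral_cong)
    fix s :: real
    have "(\<integral>\<^sup>+t. ennreal (measure M {\<omega>\<in>space M. s<Z \<omega> \<and> (t::real)<1}) * indicator {0..} t \<partial>lborel)
        = (\<integral>\<^sup>+t. ennreal (measure M {\<omega>\<in>space M. s<Z \<omega>}) * indicator {0..<1::real} t \<partial>lborel)"
      by (intro nn_integral_cong) (auto simp: indicator_def)
    also have "\<dots> = ennreal (measure M {\<omega>\<in>space M. s<Z \<omega>})"
      by (simp add: nn_integral_cmult)
    finally show "(\<integral>\<^sup>+t. ennreal (measure M {\<omega>\<in>space M. s<Z \<omega> \<and> (t::real)<1}) * indicator {0..} t \<partial>lborel) * indicator {0..} s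
       = ennreal (measure M {\<omega>\<in>space M. s<Z \<omega>}) * indicator {0..} s" by simp
  qed
  finally show ?thesis .
qed

lemma dbl_cong:
  fixes f g :: "real \<Rightarrow> real \<Rightarrow> real"
  assumes "\<And>s t. 0 \<le> s \<Longrightarrow> 0 \<le> t \<Longrightarrow> f s t = g s t"
  shows "(\<integral>\<^sup>+s. (\<integral>\<^sup>+t. ennreal (f s t) * indicator {0..} t \<partial>lborel) * indicator {0..} s \<partial>lborel)
       = (\<integral>\<^sup>+s. (\<integral>\<^sup>+t. ennreal (g s t) * indicator {0..} t \<partial>lborel) * indicator {0..} s \<partial>lborel)"
proof (intro nn_integral_cong)
  fix s :: real
  show "(\<integral>\<^sup>+t. ennreal (f s t) * indicator {0..} t \<partial>lborel) * indicator {0..} s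
      = (\<integral>\<^sup>+t. ennreal (g s t) * indicator {0..} t \<partial>lborel) * indicator {0..} s"
  proof (cases "0 \<le> s")
    case True
    have "(\<integral>\<^sup>+t. ennreal (f s t) * indicator {0..} t \<partial>lborel) = (\<integral>\<^sup>+t. ennreal (g s t) * indicator {0..} t \<partial>lborel)"
      using True assms by (intro nn_integral_cong) (simp add: indicator_def)
    then show ?thesis by simp
  qed simp
qed

lemma dbl_mono:
  fixes f g :: "real \<Rightarrow> real \<Rightarrow> real"
  assumes "\<And>s t. 0 \<le> s \<Longrightarrow> 0 \<le> t \<Longrightarrow> f s t \<le> g s t"
  shows "(\<integral>\<^sup>+s. (\<integral>\<^sup>+t. ennreal (f s t) * indicator {0..} t \<partial>lborel) * indicator {0..} s \<partial>lborel)
       \<le> (\<integral>\<^sup>+s. (\<integral>\<^sup>+t. ennreal (g s t) * indicator {0..} t \<partial>lborel) * indicator {0..} s \<partial>lborel)"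
proof (intro nn_integral_mono)
  fix s :: real
  show "(\<integral>\<^sup>+t. ennreal (f s t) * indicator {0..} t \<partial>lborel) * indicator {0..} s
      \<le> (\<integral>\<^sup>+t. ennreal (g s t) * indicator {0..} t \<partial>lborel) * indicator {0..} s"
  proof (cases "0 \<le> s")
    case True
    have "(\<integral>\<^sup>+t. ennreal (f s t) * indicator {0..} t \<partial>lborel) \<le> (\<integral>\<^sup>+t. ennreal (g s t) * indicator {0..} t \<partial>lborel)"
      using True assms by (intro nn_integral_mono) (simp add: indicator_def ennreal_leI)
    then show ?thesis by (simp add: mult_right_mono)
  qed simp
qed

lemma int_first:
  fixes \<alpha> :: real assumes "\<alpha> > 1"
  shows "(\<integral>\<^sup>+s. ennreal ((1+s) powr (-\<alpha>)) * indicator {0..} s \<partial>lborel) = ennreal (1/(\<alpha>-1))"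
  using nn_int_powr[of \<alpha> 1 0] assms by simp

lemma int_second:
  fixes \<alpha> :: real assumes "\<alpha> > 2"
  shows "(\<integral>\<^sup>+s. (\<integral>\<^sup>+t. ennreal ((1 + max s t) powr (-\<alpha>)) * indicator {0..} t \<partial>lborel) * indicator {0..} s \<partial>lborel)
    = ennreal (2/((\<alpha>-1)*(\<alpha>-2)))"
proof -
  have "(\<integral>\<^sup>+s. (\<integral>\<^sup>+t. ennreal ((1 + max s t) powr (-\<alpha>)) * indicator {0..} t \<partial>lborel) * indicator {0..} s \<partial>lborel)
    = (\<integral>\<^sup>+s. (ennreal (s * (1+s) powr (-\<alpha>)) + ennreal ((1+s) powr (1-\<alpha>) / (\<alpha>-1))) * indicator {0..} s \<partial>lborel)"
  proof (intro nn_integral_cong)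
    fix s :: real
    show "(\<integral>\<^sup>+t. ennreal ((1 + max s t) powr (-\<alpha>)) * indicator {0..} t \<partial>lborel) * indicator {0..} s
      = (ennreal (s * (1+s) powr (-\<alpha>)) + ennreal ((1+s) powr (1-\<alpha>) / (\<alpha>-1))) * indicator {0..} s"
      using assms by (cases "0 \<le> s") (simp_all add: nn_int_max)
  qed
  also have "\<dots> = ennreal (2/((\<alpha>-1)*(\<alpha>-2)))" using assms by (rule nn_int_second)
  finally show ?thesis .
qed

lemma int_upper:
  fixes \<alpha> \<beta> :: real assumes "\<alpha> > 1" "\<beta> > 2"
  shows "(\<integral>\<^sup>+s. (\<integral>\<^sup>+t. ennreal ((1+s) powr (\<alpha>-\<beta>) * ((1+s)+t) powr (-\<alpha>)) * indicator {0..} t \<partial>lborel) * indicator {0..} s \<partial>lborel)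
    = ennreal (1/((\<alpha>-1)*(\<beta>-2)))"
proof -
  have "(\<integral>\<^sup>+s. (\<integral>\<^sup>+t. ennreal ((1+s) powr (\<alpha>-\<beta>) * ((1+s)+t) powr (-\<alpha>)) * indicator {0..} t \<partial>lborel) * indicator {0..} s \<partial>lborel)
    = (\<integral>\<^sup>+s. ennreal (1/(\<alpha>-1)) * (ennreal ((1+s) powr (-(\<beta>-1))) * indicator {0..} s) \<partial>lborel)"
  proof (intro nn_integral_cong)
    fix s :: real
    show "(\<integral>\<^sup>+t. ennreal ((1+s) powr (\<alpha>-\<beta>) * ((1+s)+t) powr (-\<alpha>)) * indicator {0..} t \<partial>lborel) * indicator {0..} s
      = ennreal (1/(\<alpha>-1)) * (ennreal ((1+s) powr (-(\<beta>-1))) * indicator {0..} s)"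
    proof (cases "0 \<le> s")
      case True
      have "(\<integral>\<^sup>+t. ennreal ((1+s) powr (\<alpha>-\<beta>) * ((1+s)+t) powr (-\<alpha>)) * indicator {0..} t \<partial>lborel)
        = (\<integral>\<^sup>+t. ennreal ((1+s) powr (\<alpha>-\<beta>)) * (ennreal (((1+s)+t) powr (-\<alpha>)) * indicator {0..} t) \<partial>lborel)"
        by (intro nn_integral_cong) (simp add: ennreal_mult' mult.assoc)
      also have "\<dots> = ennreal ((1+s) powr (\<alpha>-\<beta>)) * ennreal ((1+s+0) powr (1-\<alpha>) / (\<alpha>-1))"
        using True assms by (subst nn_integral_cmult) (auto simp: nn_int_powr)
      also have "\<dots> = ennreal (1/(\<alpha>-1)) * ennreal ((1+s) powr (-(\<beta>-1)))"
      proof -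
        have "(1+s) powr (\<alpha>-\<beta>) * ((1+s+0) powr (1-\<alpha>) / (\<alpha>-1)) = 1/(\<alpha>-1) * (1+s) powr (-(\<beta>-1))"
        proof -
          have "(1+s) powr (\<alpha>-\<beta>) * (1+s) powr (1-\<alpha>) = (1+s) powr (-(\<beta>-1))"
            by (simp add: powr_add[symmetric])
          then show ?thesis by (simp add: field_simps)
        qed
        then show ?thesis using assms True by (simp add: ennreal_mult'[symmetric])
      qed
      finally show ?thesis using True by simp
    qed simp
  qed
  also have "\<dots> = ennreal (1/(\<alpha>-1)) * (\<integral>\<^sup>+s. ennreal ((1+s) powr (-(\<beta>-1))) * indicator {0..} s \<partial>lborel)"
    by (rule nn_integral_cmult) simp
  also have I: "(\<integral>\<^sup>+s. ennreal ((1+s) powr (-(\<beta>-1))) * indicator {0..} s \<partial>lborel) = ennreal (1/(\<beta>-2))"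
    using nn_int_powr[of "\<beta>-1" 1 0] assms by simp
  also have "ennreal (1/(\<alpha>-1)) * ennreal (1/(\<beta>-2)) = ennreal (1/((\<alpha>-1)*(\<beta>-2)))"
    using assms by (subst ennreal_mult'[symmetric]) auto
  finally show ?thesis .
qed

lemma int_lower:
  fixes \<alpha> \<beta> :: real assumes "\<alpha> > 1" "\<beta> > 1"
  shows "(\<integral>\<^sup>+s. (\<integral>\<^sup>+t. ennreal ((1+t) powr (-\<alpha>) * (1+s) powr (-\<beta>)) * indicator {0..} t \<partial>lborel) * indicator {0..} s \<partial>lborel)
    = ennreal (1/((\<alpha>-1)*(\<beta>-1)))"
proof -
  have "(\<integral>\<^sup>+s. (\<integral>\<^sup>+t. ennreal ((1+t) powr (-\<alpha>) * (1+s) powr (-\<beta>)) * indicator {0..} t \<partial>lborel) * indicator {0..} s \<partial>lborel)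
    = (\<integral>\<^sup>+s. ennreal (1/(\<alpha>-1)) * (ennreal ((1+s) powr (-\<beta>)) * indicator {0..} s) \<partial>lborel)"
  proof (intro nn_integral_cong)
    fix s :: real
    have "(\<integral>\<^sup>+t. ennreal ((1+t) powr (-\<alpha>) * (1+s) powr (-\<beta>)) * indicator {0..} t \<partial>lborel)
        = (\<integral>\<^sup>+t. ennreal ((1+s) powr (-\<beta>)) * (ennreal ((1+t) powr (-\<alpha>)) * indicator {0..} t) \<partial>lborel)"
      by (intro nn_integral_cong) (simp add: ennreal_mult' ac_simps)
    also have "\<dots> = ennreal ((1+s) powr (-\<beta>)) * ennreal (1/(\<alpha>-1))"
      using assms by (subst nn_integral_cmult) (auto simp: int_first)
    finally show "(\<integral>\<^sup>+t. ennreal ((1+t) powr (-\<alpha>) * (1+s) powr (-\<beta>)) * indicator {0..} t \<partial>lborel) * indicator {0..} s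
      = ennreal (1/(\<alpha>-1)) * (ennreal ((1+s) powr (-\<beta>)) * indicator {0..} s)"
      by (simp add: mult.commute mult.left_commute)
  qed
  also have "\<dots> = ennreal (1/(\<alpha>-1)) * ennreal (1/(\<beta>-1))"
    using assms by (subst nn_integral_cmult) (auto simp: int_first)
  also have "\<dots> = ennreal (1/((\<alpha>-1)*(\<beta>-1)))"
    using assms by (subst ennreal_mult'[symmetric]) auto
  finally show ?thesis .
qed

lemma col_lower:
  fixes a b \<gamma> u v :: real
  assumes "a \<in> {0,1}" "b \<in> {0,1}" "\<gamma> > 0" "u \<ge> 0" "v \<ge> 0"
  shows "(1+u) powr (-(a * \<gamma>)) * (1+v) powr (-(b * \<gamma>)) \<le> (1 + a * u + b * v) powr (-\<gamma>)"
proof -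
  have "(1+u) powr (-\<gamma>) * (1+v) powr (-\<gamma>) \<le> (1 + u + v) powr (-\<gamma>)"
  proof -
    have "(1+u) powr (-\<gamma>) * (1+v) powr (-\<gamma>) = ((1+u) * (1+v)) powr (-\<gamma>)"
      using assms by (simp add: powr_mult)
    also have "\<dots> \<le> (1 + u + v) powr (-\<gamma>)"
      using assms by (intro powr_mono2') (auto simp: algebra_simps)
    finally show ?thesis .
  qed
  then show ?thesis using assms by auto
qed

lemma col_upper:
  fixes a b \<gamma> u v :: real
  assumes "a \<in> {0,1}" "b \<in> {0,1}" "\<gamma> > 0" "u \<ge> 0" "v \<ge> 0"
  shows "(1 + a * u + b * v) powr (-\<gamma>) \<le> (1+v) powr ((a-b) * \<gamma>) * ((1+v)+u) powr (-(a * \<gamma>))"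
proof -
  have "(1+u) powr (-\<gamma>) \<le> (1+v) powr \<gamma> * ((1+v)+u) powr (-\<gamma>)"
  proof -
    have "(1+u) powr (-\<gamma>) = (1/(1+u)) powr \<gamma>"
      using assms by (simp add: powr_minus_divide powr_divide)
    also have "\<dots> \<le> ((1+v)/((1+v)+u)) powr \<gamma>"
      using assms by (intro powr_mono2) (auto simp: field_simps)
    also have "\<dots> = (1+v) powr \<gamma> * ((1+v)+u) powr (-\<gamma>)"
      using assms by (simp add: powr_divide powr_minus_divide)
    finally show ?thesis .
  qed
  then show ?thesis using assms by (auto simp: add_ac)
qed

lemma cov_expand:
  assumes M: "prob_space M" and X: "integrable M X" and Y: "integrable M Y"
    and XY: "integrable M (\<lambda>\<omega>. X \<omega> * Y \<omega>)"
  shows "covariance M X Y = (LINT \<omega>|M. X \<omega> * Y \<omega>) - (LINT \<omega>|M. X \<omega>) * (LINT \<omega>|M. Y \<omega>)"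
proof -
  interpret prob_space M by fact
  define a where "a = (LINT \<omega>|M. X \<omega>)"
  define b where "b = (LINT \<omega>|M. Y \<omega>)"
  have "covariance M X Y = (LINT \<omega>|M. (X \<omega> * Y \<omega> - b * X \<omega>) - (a * Y \<omega> - a * b))"
    unfolding covariance_def a_def[symmetric] b_def[symmetric]
    by (intro Bochner_Integration.integral_cong) (auto simp: algebra_simps)
  also have "\<dots> = ((LINT \<omega>|M. X \<omega> * Y \<omega>) - b * a) - (a * b - a * b)"
    using X Y XY by (simp add: a_def b_def prob_space)
  finally show ?thesis unfolding a_def b_def by simp
qed

lemma cov_scale:
  "covariance M (\<lambda>\<omega>. p * X \<omega>) (\<lambda>\<omega>. q * Y \<omega>) = p * q * covariance M X Y"
proof -
  have "covariance M (\<lambda>\<omega>. p * X \<omega>) (\<lambda>\<omega>. q * Y \<omega>)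
     = (LINT \<omega>|M. (p * q) * ((X \<omega> - (LINT \<eta>|M. X \<eta>)) * (Y \<omega> - (LINT \<eta>|M. Y \<eta>))))"
    unfolding covariance_def by (simp add: algebra_simps)
  also have "\<dots> = p * q * covariance M X Y"
    unfolding covariance_def by (rule integral_mult_right_zero)
  finally show ?thesis .
qed

lemma frac_aux1:
  fixes A B :: real assumes "A \<noteq> 0" "B \<noteq> 0"
  shows "2/(A * B) - (1/A) * (1/A) = (2 * A - B)/(A^2 * B)"
  using assms by (simp add: field_simps power2_eq_square)

lemma frac_aux2:
  fixes A B C E p q :: real assumes "A \<noteq> 0" "B \<noteq> 0" "C \<noteq> 0" "E \<noteq> 0"
  shows "p/(A^2 * B) * (q/(C^2 * E)) - (2 * (1/(A * C * E)))^2 = (p * q * E - 4 * B)/(A^2 * B * C^2 * E^2)"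
  using assms by (simp add: field_simps power2_eq_square)

lemma frac_aux3:
  fixes A C E :: real assumes "A \<noteq> 0" "C \<noteq> 0" "E \<noteq> 0"
  shows "1/(A * E) - (1/A) * (1/C) = (C - E)/(A * C * E)"
  using assms by (simp add: field_simps)

lemma corr_bound:
  fixes \<alpha> \<beta> P :: real
  assumes a: "\<alpha> > 2" and b: "\<beta> > 2" and ab: "\<alpha> \<le> \<beta>"
    and PL: "1/((\<alpha>-1) * (\<beta>-1)) \<le> P" and PU: "P \<le> 1/((\<alpha>-1) * (\<beta>-2))"
  defines "v1 \<equiv> 2/((\<alpha>-1) * (\<alpha>-2)) - (1/(\<alpha>-1)) * (1/(\<alpha>-1))"
    and "v2 \<equiv> 2/((\<beta>-1) * (\<beta>-2)) - (1/(\<beta>-1)) * (1/(\<beta>-1))"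
    and "cv \<equiv> P - (1/(\<alpha>-1)) * (1/(\<beta>-1))"
  shows "0 \<le> cv / sqrt (v1 * v2) \<and> cv / sqrt (v1 * v2) < 1/2"
proof -
  have a1: "\<alpha> - 1 > 0" "\<alpha> - 2 > 0" using a by auto
  have b1: "\<beta> - 1 > 0" "\<beta> - 2 > 0" using b by auto
  have v1: "v1 = \<alpha> / ((\<alpha>-1)^2 * (\<alpha>-2))"
    unfolding v1_def using frac_aux1[of "\<alpha>-1" "\<alpha>-2"] a1 by simp
  have v2: "v2 = \<beta> / ((\<beta>-1)^2 * (\<beta>-2))"
    unfolding v2_def using frac_aux1[of "\<beta>-1" "\<beta>-2"] b1 by simp
  define D where "D = 1/((\<alpha>-1) * (\<beta>-1) * (\<beta>-2))"
  have cvD: "cv \<le> D"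
  proof -
    have "cv \<le> 1/((\<alpha>-1) * (\<beta>-2)) - (1/(\<alpha>-1)) * (1/(\<beta>-1))" unfolding cv_def using PU by simp
    also have "\<dots> = D" unfolding D_def using frac_aux3[of "\<alpha>-1" "\<beta>-1" "\<beta>-2"] a1 b1 by simp
    finally show ?thesis .
  qed
  have cv0: "0 \<le> cv" unfolding cv_def using PL by simp
  have pos: "v1 * v2 > 0" unfolding v1 v2 using a1 b1 a b by (intro mult_pos_pos divide_pos_pos) auto
  have poly: "4 * (\<alpha>-2) < \<alpha> * \<beta> * (\<beta>-2)"
  proof -
    have "\<alpha> * \<beta> > 2 * 2" using a b by (intro mult_strict_mono) auto
    then have "4 * (\<alpha>-2) < (\<alpha> * \<beta>) * (\<alpha>-2)" using a1 by (intro mult_strict_right_mono) auto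
    also have "\<dots> \<le> (\<alpha> * \<beta>) * (\<beta>-2)" using a b ab by (intro mult_left_mono) auto
    finally show ?thesis by simp
  qed
  have "v1 * v2 - (2 * D)^2 = (\<alpha> * \<beta> * (\<beta>-2) - 4 * (\<alpha>-2)) / ((\<alpha>-1)^2 * (\<alpha>-2) * (\<beta>-1)^2 * (\<beta>-2)^2)"
    unfolding v1 v2 D_def using frac_aux2[of "\<alpha>-1" "\<alpha>-2" "\<beta>-1" "\<beta>-2" \<alpha> \<beta>] a1 b1 by simp
  also have "\<dots> > 0" using poly a1 b1 by (intro divide_pos_pos) auto
  finally have "(2 * D)^2 < v1 * v2" by simp
  then have sq: "2 * D < sqrt (v1 * v2)" by (rule real_less_rsqrt)
  have "cv / sqrt (v1 * v2) < 1/2"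
    using cvD sq pos by (simp add: divide_less_eq)
  moreover have "0 \<le> cv / sqrt (v1 * v2)" using cv0 pos by simp
  ultimately show ?thesis by simp
qed

lemma pearson_sym: "pearson_corr M X Y = pearson_corr M Y X"
  unfolding pearson_corr_def covariance_def by (simp add: mult.commute)

lemma main_le:
  fixes M :: "'a measure" and n :: nat
    and c :: "nat \<Rightarrow> nat \<Rightarrow> real"
    and \<sigma> \<gamma> :: "nat \<Rightarrow> real"
    and X :: "nat \<Rightarrow> 'a \<Rightarrow> real"
    and k l :: nat
  assumes M: "prob_space M"
    and c: "\<And>i j. i < n \<Longrightarrow> j < n + 1 \<Longrightarrow> c i j \<in> {0, 1}"
    and s: "\<And>i. i < n \<Longrightarrow> \<sigma> i > 0"
    and g: "\<And>j. j < n + 1 \<Longrightarrow> \<gamma> j > 0"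
    and Xm: "\<And>i. i < n \<Longrightarrow> X i \<in> borel_measurable M"
    and surv: "\<And>x. (\<forall>i<n. x i > 0) \<Longrightarrow>
           measure M {\<omega> \<in> space M. \<forall>i<n. X i \<omega> > x i}
             = (\<Prod>j<n + 1. (1 + (\<Sum>i<n. c i j / \<sigma> i * x i)) powr (- \<gamma> j))"
    and kl: "k < n" "l < n" "k \<noteq> l"
    and ak: "(\<Sum>j<n + 1. c k j * \<gamma> j) > 2"
    and al: "(\<Sum>j<n + 1. c l j * \<gamma> j) > 2"
    and ab: "(\<Sum>j<n + 1. c k j * \<gamma> j) \<le> (\<Sum>j<n + 1. c l j * \<gamma> j)"
  shows "0 \<le> pearson_corr M (X k) (X l) \<and> pearson_corr M (X k) (X l) < 1 / 2"
proof -
  interpret prob_space M by fact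
  define \<alpha> where "\<alpha> = (\<Sum>j<n + 1. c k j * \<gamma> j)"
  define \<beta> where "\<beta> = (\<Sum>j<n + 1. c l j * \<gamma> j)"
  have a: "\<alpha> > 2" and b: "\<beta> > 2" and ab': "\<alpha> \<le> \<beta>" using ak al ab unfolding \<alpha>_def \<beta>_def by auto
  have sk: "\<sigma> k > 0" "\<sigma> l > 0" using s kl by auto
  define Y1 where "Y1 = (\<lambda>\<omega>. X k \<omega> / \<sigma> k)"
  define Y2 where "Y2 = (\<lambda>\<omega>. X l \<omega> / \<sigma> l)"
  have Y1m: "Y1 \<in> borel_measurable M" unfolding Y1_def using Xm[OF kl(1)] by measurable
  have Y2m: "Y2 \<in> borel_measurable M" unfolding Y2_def using Xm[OF kl(2)] by measurable
  define S where "S u v = (\<Prod>j<n + 1. (1 + c k j * u + c l j * v) powr (- \<gamma> j))" for u v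
  have joint: "measure M {\<omega>\<in>space M. u < Y1 \<omega> \<and> v < Y2 \<omega>} = S u v" if uv: "0 \<le> u" "0 \<le> v" for u v
  proof -
    have "{\<omega>\<in>space M. u < Y1 \<omega> \<and> v < Y2 \<omega>} = {\<omega>\<in>space M. X k \<omega> > u * \<sigma> k \<and> X l \<omega> > v * \<sigma> l}"
      unfolding Y1_def Y2_def using sk by (auto simp: pos_less_divide_eq)
    moreover have "measure M {\<omega>\<in>space M. X k \<omega> > u * \<sigma> k \<and> X l \<omega> > v * \<sigma> l} = S u v"
      unfolding S_def by (rule biv(1)) (fact M c s Xm surv kl uv)+
    ultimately show ?thesis by simp
  qed
  have AE: "AE \<omega> in M. 0 < Y1 \<omega> \<and> 0 < Y2 \<omega>"
  proof -
    have "AE \<omega> in M. \<forall>i<n. X i \<omega> > 0"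
      by (rule biv(2)[where u=0 and v=0]) (fact M c s Xm surv kl | simp)+
    then show ?thesis
  proof eventually_elim
    case (elim \<omega>)
    then show ?case using kl sk unfolding Y1_def Y2_def by auto
  qed
  qed
  have powsum: "(\<Prod>j<n+1. (1 + c i j * u) powr (-\<gamma> j)) = (1+u) powr (- (\<Sum>j<n + 1. c i j * \<gamma> j))"
    if "i < n" "0 \<le> u" for i u
  proof -
    have "(\<Prod>j<n+1. (1 + c i j * u) powr (-\<gamma> j)) = (\<Prod>j<n+1. (1+u) powr (- (c i j * \<gamma> j)))"
    proof (rule prod.cong[OF refl])
      fix j assume "j \<in> {..<n+1}"
      then have "c i j \<in> {0,1}" using c that by auto
      then show "(1 + c i j * u) powr (-\<gamma> j) = (1+u) powr (- (c i j * \<gamma> j))" using that by auto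
    qed
    also have "\<dots> = (1+u) powr (\<Sum>j<n+1. - (c i j * \<gamma> j))"
      using that by (subst powr_sum) auto
    finally show ?thesis by (simp add: sum_negf)
  qed
  have S0: "S u 0 = (1+u) powr (-\<alpha>)" if "0 \<le> u" for u
    unfolding S_def \<alpha>_def using powsum[OF kl(1) that] by simp
  have S0': "S 0 v = (1+v) powr (-\<beta>)" if "0 \<le> v" for v
    unfolding S_def \<beta>_def using powsum[OF kl(2) that] by simp
  have marg1: "measure M {\<omega>\<in>space M. u < Y1 \<omega>} = (1+u) powr (-\<alpha>)" if "0 \<le> u" for u
  proof -
    have "measure M {\<omega>\<in>space M. u < Y1 \<omega>} = measure M {\<omega>\<in>space M. u < Y1 \<omega> \<and> 0 < Y2 \<omega>}"
    proof (rule prob_eq_AE)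
      show "AE \<omega> in M. (u < Y1 \<omega>) = (u < Y1 \<omega> \<and> 0 < Y2 \<omega>)" using AE by eventually_elim auto
      show "{\<omega>\<in>space M. u < Y1 \<omega>} \<in> events" using Y1m by measurable
      show "{\<omega>\<in>space M. u < Y1 \<omega> \<and> 0 < Y2 \<omega>} \<in> events" using Y1m Y2m by measurable
    qed
    also have "\<dots> = (1+u) powr (-\<alpha>)" using joint[OF that order_refl] S0[OF that] by simp
    finally show ?thesis .
  qed
  have marg2: "measure M {\<omega>\<in>space M. v < Y2 \<omega>} = (1+v) powr (-\<beta>)" if "0 \<le> v" for v
  proof -
    have "measure M {\<omega>\<in>space M. v < Y2 \<omega>} = measure M {\<omega>\<in>space M. 0 < Y1 \<omega> \<and> v < Y2 \<omega>}"
    proof (rule prob_eq_AE)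
      show "AE \<omega> in M. (v < Y2 \<omega>) = (0 < Y1 \<omega> \<and> v < Y2 \<omega>)" using AE by eventually_elim auto
      show "{\<omega>\<in>space M. v < Y2 \<omega>} \<in> events" using Y2m by measurable
      show "{\<omega>\<in>space M. 0 < Y1 \<omega> \<and> v < Y2 \<omega>} \<in> events" using Y1m Y2m by measurable
    qed
    also have "\<dots> = (1+v) powr (-\<beta>)" using joint[OF order_refl that] S0'[OF that] by simp
    finally show ?thesis .
  qed
  have Slow: "(1+u) powr (-\<alpha>) * (1+v) powr (-\<beta>) \<le> S u v" if uv: "0 \<le> u" "0 \<le> v" for u v
  proof -
    have "(1+u) powr (-\<alpha>) * (1+v) powr (-\<beta>)
        = (\<Prod>j<n+1. (1+u) powr (-(c k j * \<gamma> j))) * (\<Prod>j<n+1. (1+v) powr (-(c l j * \<gamma> j)))"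
    proof -
      have e1: "(1+u) powr (-\<alpha>) = (\<Prod>j<n+1. (1+u) powr (-(c k j * \<gamma> j)))"
        unfolding \<alpha>_def sum_negf[symmetric] using uv by (intro powr_sum) simp
      have e2: "(1+v) powr (-\<beta>) = (\<Prod>j<n+1. (1+v) powr (-(c l j * \<gamma> j)))"
        unfolding \<beta>_def sum_negf[symmetric] using uv by (intro powr_sum) simp
      show ?thesis unfolding e1 e2 ..
    qed
    also have "\<dots> = (\<Prod>j<n+1. (1+u) powr (-(c k j * \<gamma> j)) * (1+v) powr (-(c l j * \<gamma> j)))"
      by (rule prod.distrib[symmetric])
    also have "\<dots> \<le> S u v" unfolding S_def
    proof (rule prod_mono)
      fix j assume "j \<in> {..<n+1}"
      then have j: "j < n + 1" by simp
      show "0 \<le> (1+u) powr (-(c k j * \<gamma> j)) * (1+v) powr (-(c l j * \<gamma> j)) \<and>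
        (1+u) powr (-(c k j * \<gamma> j)) * (1+v) powr (-(c l j * \<gamma> j)) \<le> (1 + c k j * u + c l j * v) powr (-\<gamma> j)"
        using col_lower[OF c[OF kl(1) j] c[OF kl(2) j] g[OF j] uv] by simp
    qed
    finally show ?thesis .
  qed
  have Sup: "S u v \<le> (1+v) powr (\<alpha>-\<beta>) * ((1+v)+u) powr (-\<alpha>)" if uv: "0 \<le> u" "0 \<le> v" for u v
  proof -
    have "S u v \<le> (\<Prod>j<n+1. (1+v) powr ((c k j - c l j) * \<gamma> j) * ((1+v)+u) powr (-(c k j * \<gamma> j)))"
      unfolding S_def
    proof (rule prod_mono)
      fix j assume "j \<in> {..<n+1}"
      then have j: "j < n + 1" by simp
      show "0 \<le> (1 + c k j * u + c l j * v) powr (-\<gamma> j) \<and>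
        (1 + c k j * u + c l j * v) powr (-\<gamma> j) \<le> (1+v) powr ((c k j - c l j) * \<gamma> j) * ((1+v)+u) powr (-(c k j * \<gamma> j))"
        using col_upper[OF c[OF kl(1) j] c[OF kl(2) j] g[OF j] uv] by simp
    qed
    also have "\<dots> = (\<Prod>j<n+1. (1+v) powr ((c k j - c l j) * \<gamma> j)) * (\<Prod>j<n+1. ((1+v)+u) powr (-(c k j * \<gamma> j)))"
      by (rule prod.distrib)
    also have "\<dots> = (1+v) powr (\<Sum>j<n+1. (c k j - c l j) * \<gamma> j) * ((1+v)+u) powr (\<Sum>j<n+1. -(c k j * \<gamma> j))"
    proof -
      have e1: "(1+v) powr (\<Sum>j<n+1. (c k j - c l j) * \<gamma> j) = (\<Prod>j<n+1. (1+v) powr ((c k j - c l j) * \<gamma> j))"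
        using uv by (intro powr_sum) simp
      have e2: "((1+v)+u) powr (\<Sum>j<n+1. -(c k j * \<gamma> j)) = (\<Prod>j<n+1. ((1+v)+u) powr (-(c k j * \<gamma> j)))"
        using uv by (intro powr_sum) simp
      show ?thesis unfolding e1 e2 ..
    qed
    also have "\<dots> = (1+v) powr (\<alpha>-\<beta>) * ((1+v)+u) powr (-\<alpha>)"
      unfolding \<alpha>_def \<beta>_def by (simp add: sum_negf sum_subtractf left_diff_distrib)
    finally show ?thesis .
  qed
  have N1: "(\<integral>\<^sup>+\<omega>. ennreal (Y1 \<omega>) \<partial>M) = ennreal (1/(\<alpha>-1))"
  proof -
    have "(\<integral>\<^sup>+\<omega>. ennreal (Y1 \<omega>) \<partial>M) = (\<integral>\<^sup>+s. ennreal (measure M {\<omega>\<in>space M. s<Y1 \<omega>}) * indicator {0..} s \<partial>lborel)"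
      by (rule layer_cake_single[OF M Y1m])
    also have "\<dots> = (\<integral>\<^sup>+s. ennreal ((1+s) powr (-\<alpha>)) * indicator {0..} s \<partial>lborel)"
      by (intro nn_integral_cong) (auto simp: marg1 indicator_def)
    also have "\<dots> = ennreal (1/(\<alpha>-1))" using a by (intro int_first) simp
    finally show ?thesis .
  qed
  have N2: "(\<integral>\<^sup>+\<omega>. ennreal (Y2 \<omega>) \<partial>M) = ennreal (1/(\<beta>-1))"
  proof -
    have "(\<integral>\<^sup>+\<omega>. ennreal (Y2 \<omega>) \<partial>M) = (\<integral>\<^sup>+s. ennreal (measure M {\<omega>\<in>space M. s<Y2 \<omega>}) * indicator {0..} s \<partial>lborel)"
      by (rule layer_cake_single[OF M Y2m])
    also have "\<dots> = (\<integral>\<^sup>+s. ennreal ((1+s) powr (-\<beta>)) * indicator {0..} s \<partial>lborel)"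
      by (intro nn_integral_cong) (auto simp: marg2 indicator_def)
    also have "\<dots> = ennreal (1/(\<beta>-1))" using b by (intro int_first) simp
    finally show ?thesis .
  qed
  have N1sq: "(\<integral>\<^sup>+\<omega>. ennreal (Y1 \<omega>) * ennreal (Y1 \<omega>) \<partial>M) = ennreal (2/((\<alpha>-1)*(\<alpha>-2)))"
  proof -
    have "(\<integral>\<^sup>+\<omega>. ennreal (Y1 \<omega>) * ennreal (Y1 \<omega>) \<partial>M) = (\<integral>\<^sup>+s. (\<integral>\<^sup>+t. ennreal (measure M {\<omega>\<in>space M. s<Y1 \<omega> \<and> t<Y1 \<omega>}) * indicator {0..} t \<partial>lborel) * indicator {0..} s \<partial>lborel)"
      by (rule layer_cake_prod'[OF M Y1m Y1m])
    also have "\<dots> = (\<integral>\<^sup>+s. (\<integral>\<^sup>+t. ennreal ((1 + max s t) powr (-\<alpha>)) * indicator {0..} t \<partial>lborel) * indicator {0..} s \<partial>lborel)"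
    proof (rule dbl_cong)
      fix s t :: real assume st: "0 \<le> s" "0 \<le> t"
      have "{\<omega>\<in>space M. s<Y1 \<omega> \<and> t<Y1 \<omega>} = {\<omega>\<in>space M. max s t < Y1 \<omega>}" by auto
      then show "measure M {\<omega>\<in>space M. s<Y1 \<omega> \<and> t<Y1 \<omega>} = (1 + max s t) powr (-\<alpha>)"
        using marg1[of "max s t"] st by simp
    qed
    also have "\<dots> = ennreal (2/((\<alpha>-1)*(\<alpha>-2)))" using a by (rule int_second)
    finally show ?thesis .
  qed
  have N2sq: "(\<integral>\<^sup>+\<omega>. ennreal (Y2 \<omega>) * ennreal (Y2 \<omega>) \<partial>M) = ennreal (2/((\<beta>-1)*(\<beta>-2)))"
  proof -
    have "(\<integral>\<^sup>+\<omega>. ennreal (Y2 \<omega>) * ennreal (Y2 \<omega>) \<partial>M) = (\<integral>\<^sup>+s. (\<integral>\<^sup>+t. ennreal (measure M {\<omega>\<in>space M. s<Y2 \<omega> \<and> t<Y2 \<omega>}) * indicator {0..} t \<partial>lborel) * indicator {0..} s \<partial>lborel)"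
      by (rule layer_cake_prod'[OF M Y2m Y2m])
    also have "\<dots> = (\<integral>\<^sup>+s. (\<integral>\<^sup>+t. ennreal ((1 + max s t) powr (-\<beta>)) * indicator {0..} t \<partial>lborel) * indicator {0..} s \<partial>lborel)"
    proof (rule dbl_cong)
      fix s t :: real assume st: "0 \<le> s" "0 \<le> t"
      have "{\<omega>\<in>space M. s<Y2 \<omega> \<and> t<Y2 \<omega>} = {\<omega>\<in>space M. max s t < Y2 \<omega>}" by auto
      then show "measure M {\<omega>\<in>space M. s<Y2 \<omega> \<and> t<Y2 \<omega>} = (1 + max s t) powr (-\<beta>)"
        using marg2[of "max s t"] st by simp
    qed
    also have "\<dots> = ennreal (2/((\<beta>-1)*(\<beta>-2)))" using b by (rule int_second)
    finally show ?thesis .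
  qed
  have N12eq: "(\<integral>\<^sup>+\<omega>. ennreal (Y2 \<omega>) * ennreal (Y1 \<omega>) \<partial>M) = (\<integral>\<^sup>+s. (\<integral>\<^sup>+t. ennreal (S t s) * indicator {0..} t \<partial>lborel) * indicator {0..} s \<partial>lborel)"
  proof -
    have "(\<integral>\<^sup>+\<omega>. ennreal (Y2 \<omega>) * ennreal (Y1 \<omega>) \<partial>M) = (\<integral>\<^sup>+s. (\<integral>\<^sup>+t. ennreal (measure M {\<omega>\<in>space M. s<Y2 \<omega> \<and> t<Y1 \<omega>}) * indicator {0..} t \<partial>lborel) * indicator {0..} s \<partial>lborel)"
      by (rule layer_cake_prod'[OF M Y2m Y1m])
    also have "\<dots> = (\<integral>\<^sup>+s. (\<integral>\<^sup>+t. ennreal (S t s) * indicator {0..} t \<partial>lborel) * indicator {0..} s \<partial>lborel)"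
    proof (rule dbl_cong)
      fix s t :: real assume st: "0 \<le> s" "0 \<le> t"
      have "{\<omega>\<in>space M. s<Y2 \<omega> \<and> t<Y1 \<omega>} = {\<omega>\<in>space M. t < Y1 \<omega> \<and> s < Y2 \<omega>}" by auto
      then show "measure M {\<omega>\<in>space M. s<Y2 \<omega> \<and> t<Y1 \<omega>} = S t s"
        using joint[OF st(2) st(1)] by simp
    qed
    finally show ?thesis .
  qed
  have N12U: "(\<integral>\<^sup>+\<omega>. ennreal (Y2 \<omega>) * ennreal (Y1 \<omega>) \<partial>M) \<le> ennreal (1/((\<alpha>-1)*(\<beta>-2)))"
  proof -
    have "(\<integral>\<^sup>+s. (\<integral>\<^sup>+t. ennreal (S t s) * indicator {0..} t \<partial>lborel) * indicator {0..} s \<partial>lborel)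
      \<le> (\<integral>\<^sup>+s. (\<integral>\<^sup>+t. ennreal ((1+s) powr (\<alpha>-\<beta>) * ((1+s)+t) powr (-\<alpha>)) * indicator {0..} t \<partial>lborel) * indicator {0..} s \<partial>lborel)"
      by (rule dbl_mono) (rule Sup)
    also have "\<dots> = ennreal (1/((\<alpha>-1)*(\<beta>-2)))" using a b by (intro int_upper) auto
    finally show ?thesis unfolding N12eq .
  qed
  have N12L: "ennreal (1/((\<alpha>-1)*(\<beta>-1))) \<le> (\<integral>\<^sup>+\<omega>. ennreal (Y2 \<omega>) * ennreal (Y1 \<omega>) \<partial>M)"
  proof -
    have "ennreal (1/((\<alpha>-1)*(\<beta>-1))) = (\<integral>\<^sup>+s. (\<integral>\<^sup>+t. ennreal ((1+t) powr (-\<alpha>) * (1+s) powr (-\<beta>)) * indicator {0..} t \<partial>lborel) * indicator {0..} s \<partial>lborel)"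
      using a b by (intro int_lower[symmetric]) auto
    also have "\<dots> \<le> (\<integral>\<^sup>+s. (\<integral>\<^sup>+t. ennreal (S t s) * indicator {0..} t \<partial>lborel) * indicator {0..} s \<partial>lborel)"
      by (rule dbl_mono) (rule Slow)
    finally show ?thesis unfolding N12eq .
  qed
  have AE1: "AE \<omega> in M. 0 \<le> Y1 \<omega>" using AE by eventually_elim auto
  have AE2: "AE \<omega> in M. 0 \<le> Y2 \<omega>" using AE by eventually_elim auto
  have HB1: "has_bochner_integral M Y1 (1/(\<alpha>-1))"
    using Y1m AE1 N1 a by (intro has_bochner_integral_nn_integral) auto
  have HB2: "has_bochner_integral M Y2 (1/(\<beta>-1))"
    using Y2m AE2 N2 b by (intro has_bochner_integral_nn_integral) auto
  have HB11: "has_bochner_integral M (\<lambda>\<omega>. Y1 \<omega> * Y1 \<omega>) (2/((\<alpha>-1)*(\<alpha>-2)))"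
  proof (rule has_bochner_integral_nn_integral)
    show "(\<lambda>\<omega>. Y1 \<omega> * Y1 \<omega>) \<in> borel_measurable M" using Y1m by measurable
    show "AE \<omega> in M. 0 \<le> Y1 \<omega> * Y1 \<omega>" using AE1 by eventually_elim auto
    show "0 \<le> 2/((\<alpha>-1)*(\<alpha>-2))" using a by simp
    have "(\<integral>\<^sup>+\<omega>. ennreal (Y1 \<omega> * Y1 \<omega>) \<partial>M) = (\<integral>\<^sup>+\<omega>. ennreal (Y1 \<omega>) * ennreal (Y1 \<omega>) \<partial>M)"
    proof (rule nn_integral_cong_AE)
      show "AE \<omega> in M. ennreal (Y1 \<omega> * Y1 \<omega>) = ennreal (Y1 \<omega>) * ennreal (Y1 \<omega>)"
        using AE1 by eventually_elim (simp add: ennreal_mult)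
    qed
    then show "(\<integral>\<^sup>+\<omega>. ennreal (Y1 \<omega> * Y1 \<omega>) \<partial>M) = ennreal (2/((\<alpha>-1)*(\<alpha>-2)))" using N1sq by simp
  qed
  have HB22: "has_bochner_integral M (\<lambda>\<omega>. Y2 \<omega> * Y2 \<omega>) (2/((\<beta>-1)*(\<beta>-2)))"
  proof (rule has_bochner_integral_nn_integral)
    show "(\<lambda>\<omega>. Y2 \<omega> * Y2 \<omega>) \<in> borel_measurable M" using Y2m by measurable
    show "AE \<omega> in M. 0 \<le> Y2 \<omega> * Y2 \<omega>" using AE2 by eventually_elim auto
    show "0 \<le> 2/((\<beta>-1)*(\<beta>-2))" using b by simp
    have "(\<integral>\<^sup>+\<omega>. ennreal (Y2 \<omega> * Y2 \<omega>) \<partial>M) = (\<integral>\<^sup>+\<omega>. ennreal (Y2 \<omega>) * ennreal (Y2 \<omega>) \<partial>M)"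
    proof (rule nn_integral_cong_AE)
      show "AE \<omega> in M. ennreal (Y2 \<omega> * Y2 \<omega>) = ennreal (Y2 \<omega>) * ennreal (Y2 \<omega>)"
        using AE2 by eventually_elim (simp add: ennreal_mult)
    qed
    then show "(\<integral>\<^sup>+\<omega>. ennreal (Y2 \<omega> * Y2 \<omega>) \<partial>M) = ennreal (2/((\<beta>-1)*(\<beta>-2)))" using N2sq by simp
  qed
  define I12 where "I12 = (\<integral>\<^sup>+\<omega>. ennreal (Y1 \<omega> * Y2 \<omega>) \<partial>M)"
  have I12eq: "I12 = (\<integral>\<^sup>+\<omega>. ennreal (Y2 \<omega>) * ennreal (Y1 \<omega>) \<partial>M)"
    unfolding I12_def
  proof (rule nn_integral_cong_AE)
    show "AE \<omega> in M. ennreal (Y1 \<omega> * Y2 \<omega>) = ennreal (Y2 \<omega>) * ennreal (Y1 \<omega>)"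
      using AE1 AE2 by eventually_elim (simp add: ennreal_mult mult.commute)
  qed
  define P where "P = enn2real I12"
  have I12fin: "I12 \<noteq> \<top>" using N12U unfolding I12eq[symmetric] by (auto simp: top_unique)
  have I12P: "I12 = ennreal P" unfolding P_def using ennreal_enn2real[of I12] I12fin by (simp add: less_top)
  have PL: "1/((\<alpha>-1)*(\<beta>-1)) \<le> P"
  proof -
    have "ennreal (1/((\<alpha>-1)*(\<beta>-1))) \<le> ennreal P" using N12L unfolding I12eq[symmetric] I12P .
    moreover have "0 \<le> P" unfolding P_def by simp
    ultimately show ?thesis by (simp add: ennreal_le_iff)
  qed
  have PU: "P \<le> 1/((\<alpha>-1)*(\<beta>-2))"
  proof -
    have "ennreal P \<le> ennreal (1/((\<alpha>-1)*(\<beta>-2)))" using N12U unfolding I12eq[symmetric] I12P .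
    moreover have "0 \<le> 1/((\<alpha>-1)*(\<beta>-2))" using a b by simp
    ultimately show ?thesis by (simp add: ennreal_le_iff)
  qed
  have HB12: "has_bochner_integral M (\<lambda>\<omega>. Y1 \<omega> * Y2 \<omega>) P"
  proof (rule has_bochner_integral_nn_integral)
    show "(\<lambda>\<omega>. Y1 \<omega> * Y2 \<omega>) \<in> borel_measurable M" using Y1m Y2m by measurable
    show "AE \<omega> in M. 0 \<le> Y1 \<omega> * Y2 \<omega>" using AE by eventually_elim auto
    show "0 \<le> P" unfolding P_def by simp
    show "(\<integral>\<^sup>+\<omega>. ennreal (Y1 \<omega> * Y2 \<omega>) \<partial>M) = ennreal P" using I12P unfolding I12_def .
  qed
  have cov12: "covariance M Y1 Y2 = P - (1/(\<alpha>-1)) * (1/(\<beta>-1))"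
    using cov_expand[OF M integrable.intros[OF HB1] integrable.intros[OF HB2]
        integrable.intros[OF HB12]]
      has_bochner_integral_integral_eq[OF HB1] has_bochner_integral_integral_eq[OF HB2]
      has_bochner_integral_integral_eq[OF HB12] by simp
  have cov11: "covariance M Y1 Y1 = 2/((\<alpha>-1)*(\<alpha>-2)) - (1/(\<alpha>-1)) * (1/(\<alpha>-1))"
    using cov_expand[OF M integrable.intros[OF HB1] integrable.intros[OF HB1]
        integrable.intros[OF HB11]]
      has_bochner_integral_integral_eq[OF HB1] has_bochner_integral_integral_eq[OF HB11] by simp
  have cov22: "covariance M Y2 Y2 = 2/((\<beta>-1)*(\<beta>-2)) - (1/(\<beta>-1)) * (1/(\<beta>-1))"
    using cov_expand[OF M integrable.intros[OF HB2] integrable.intros[OF HB2]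
        integrable.intros[OF HB22]]
      has_bochner_integral_integral_eq[OF HB2] has_bochner_integral_integral_eq[OF HB22] by simp
  have Xk: "X k = (\<lambda>\<omega>. \<sigma> k * Y1 \<omega>)" and Xl: "X l = (\<lambda>\<omega>. \<sigma> l * Y2 \<omega>)"
    unfolding Y1_def Y2_def using sk by auto
  define v1 where "v1 = 2/((\<alpha>-1)*(\<alpha>-2)) - (1/(\<alpha>-1)) * (1/(\<alpha>-1))"
  define v2 where "v2 = 2/((\<beta>-1)*(\<beta>-2)) - (1/(\<beta>-1)) * (1/(\<beta>-1))"
  define cv where "cv = P - (1/(\<alpha>-1)) * (1/(\<beta>-1))"
  have "pearson_corr M (X k) (X l) = (\<sigma> k * \<sigma> l * cv) / sqrt ((\<sigma> k * \<sigma> k * v1) * (\<sigma> l * \<sigma> l * v2))"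
    unfolding pearson_corr_def Xk Xl cov_scale cov12 cov11 cov22 v1_def v2_def cv_def ..
  also have "\<dots> = cv / sqrt (v1 * v2)"
  proof -
    have "(\<sigma> k * \<sigma> k * v1) * (\<sigma> l * \<sigma> l * v2) = (\<sigma> k * \<sigma> l)^2 * (v1 * v2)" by (simp add: power2_eq_square ac_simps)
    then have "sqrt ((\<sigma> k * \<sigma> k * v1) * (\<sigma> l * \<sigma> l * v2)) = (\<sigma> k * \<sigma> l) * sqrt (v1 * v2)"
      using sk by (simp add: real_sqrt_mult)
    then show ?thesis using sk by simp
  qed
  finally have eq: "pearson_corr M (X k) (X l) = cv / sqrt (v1 * v2)" .
  show ?thesis unfolding eq v1_def v2_def cv_def using corr_bound[OF a b ab' PL PU] by simp
qed

theorem corollary3p1: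
  fixes M :: "'a measure" and n :: nat
    and c :: "nat \<Rightarrow> nat \<Rightarrow> real"
    and \<sigma> \<gamma> :: "nat \<Rightarrow> real"
    and X :: "nat \<Rightarrow> 'a \<Rightarrow> real"
    and k l :: nat
  assumes "prob_space M"
    and "n \<ge> 2"
    and "\<And>i j. i < n \<Longrightarrow> j < n + 1 \<Longrightarrow> c i j \<in> {0, 1}"
    and "\<And>i. i < n \<Longrightarrow> \<sigma> i > 0"
    and "\<And>j. j < n + 1 \<Longrightarrow> \<gamma> j > 0"
    and "\<And>i. i < n \<Longrightarrow> X i \<in> borel_measurable M"
    and "\<And>x. (\<forall>i<n. x i > 0) \<Longrightarrow>
           measure M {\<omega> \<in> space M. \<forall>i<n. X i \<omega> > x i}
             = (\<Prod>j<n + 1. (1 + (\<Sum>i<n. c i j / \<sigma> i * x i)) powr (- \<gamma> j))"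
    and "k < n" and "l < n" and "k \<noteq> l"
    and "(\<Sum>j<n + 1. c k j * \<gamma> j) > 2"
    and "(\<Sum>j<n + 1. c l j * \<gamma> j) > 2"
  shows "0 \<le> pearson_corr M (X k) (X l) \<and> pearson_corr M (X k) (X l) < 1 / 2"
proof (cases "(\<Sum>j<n + 1. c k j * \<gamma> j) \<le> (\<Sum>j<n + 1. c l j * \<gamma> j)")
  case True
  show ?thesis using assms(1,3,4,5,6,7,8,9,10,11,12) True by (rule main_le)
next
  case False
  have kl': "l \<noteq> k" using assms(10) by simp
  have ab: "(\<Sum>j<n + 1. c l j * \<gamma> j) \<le> (\<Sum>j<n + 1. c k j * \<gamma> j)" using False by simp
  have "0 \<le> pearson_corr M (X l) (X k) \<and> pearson_corr M (X l) (X k) < 1 / 2"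
    using assms(1,3,4,5,6,7,9,8) kl' assms(12,11) ab by (rule main_le)
  then show ?thesis by (simp add: pearson_sym)
qed

end
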